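(* Let $q_1<q_2<\cdots$ be the primes, $\Pi(x)$ the prime-counting function, and let $\phi:\mathbb{N}_0\to\mathbb{N}_0$ be defined by $\phi(q_j)=q_{j+1}$ for every $j\ge1$ and $\phi(x)=0$ if $x$ is not prime (including $x=0$). Then $\phi(x)\neq x$ for all $x\in\mathbb{N}$ and $\phi$ has no cycle. Moreover, for $n\ge2$: (1) $M_n(\phi)$ is nilpotent of degree $\Pi(n)$. (2) For $1\le k\le\Pi(n)$, $M_n(\phi)^k=\sum_{j=1}^{\Pi(n)-k}E_n(q_{j+k},q_j)$ and $\#M_n(\phi)^k=\Pi(n)-k$. (3) $\widehat{M}_n(\phi)^{-1}=I+\sum_{1\le j<i\le\Pi(n)}E_n(q_i,q_j)$ and $\#\widehat{M}_n(\phi)^{-1}=n+\binom{\Pi(n)}{2}$.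
   Context: $\mathbb{N}=\{1,2,\dots\}$, $\mathbb{N}_0=\mathbb{N}\cup\{0\}$, $D_n=\{1,\dots,n\}$, $D_{n,0}=D_n\cup\{0\}$. The local function $\phi_n:D_{n,0}\to D_{n,0}$ is $\phi_n(x)=\phi(x)$ if $x\in D_n$ and $\phi(x)\in D_n$, and $\phi_n(x)=0$ otherwise. A cycle of $\phi$ is given by $m\ge2$ and $x\in\mathbb{N}$ with $\phi^m(x)=x$. For $1\le i\le n$, $\mathbf{e}_i$ is the $i$-th unit vector in $\mathbb{Z}^n$ and $\mathbf{e}_0$ the zero vector; $E_n(i,j)=\mathbf{e}_i\mathbf{e}_j^t$. $M_n(\phi)$ is the $n\times n$ matrix whose $j$-th column is $\mathbf{e}_{\phi_n(j)}$, $\widehat{M}_n(\phi)=I-M_n(\phi)$. $\#A$ is the number of nonzero entries of $A$. A matrix $A$ is nilpotent of degree $k$ if $A^k=0$ and $A^{k-1}\ne0$. *)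

theory Defs
  imports "HOL-Computational_Algebra.Primes" "HOL-Library.Infinite_Set" "Jordan_Normal_Form.Matrix"
begin

(* 1-indexed matrix conventions: the paper's entry (i,j), 1 <= i,j <= n, is
   the Jordan_Normal_Form entry (i-1, j-1). *)

definition loc_fun :: "(nat \<Rightarrow> nat) \<Rightarrow> nat \<Rightarrow> nat \<Rightarrow> nat" where
  "loc_fun \<phi> n x = (if x \<in> {1..n} \<and> \<phi> x \<in> {1..n} then \<phi> x else 0)"

text \<open>M_n(phi): the j-th column is e_{phi_n(j)} (e_0 = zero vector).\<close>
definition M_mat :: "nat \<Rightarrow> (nat \<Rightarrow> nat) \<Rightarrow> int mat" where
  "M_mat n \<phi> = mat n n (\<lambda>(i, j). if loc_fun \<phi> n (j + 1) = i + 1 then 1 else 0)"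

definition M_hat :: "nat \<Rightarrow> (nat \<Rightarrow> nat) \<Rightarrow> int mat" where
  "M_hat n \<phi> = 1\<^sub>m n - M_mat n \<phi>"

text \<open>E_n(i,j) = e_i e_j^t (1-indexed; e_0 = 0).\<close>
definition E_mat :: "nat \<Rightarrow> nat \<Rightarrow> nat \<Rightarrow> int mat" where
  "E_mat n i j = mat n n (\<lambda>(a, b). if a + 1 = i \<and> b + 1 = j then 1 else 0)"

definition mat_sum :: "nat \<Rightarrow> ('b \<Rightarrow> int mat) \<Rightarrow> 'b set \<Rightarrow> int mat" where
  "mat_sum n f J = mat n n (\<lambda>ij. \<Sum>j\<in>J. f j $$ ij)"

definition nnz :: "'a::zero mat \<Rightarrow> nat" where
  "nnz A = card {(i, j). i < dim_row A \<and> j < dim_col A \<and> A $$ (i, j) \<noteq> 0}"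

definition nilpotent_of_degree :: "'a::semiring_1 mat \<Rightarrow> nat \<Rightarrow> bool" where
  "nilpotent_of_degree A k \<longleftrightarrow>
     A ^\<^sub>m k = 0\<^sub>m (dim_row A) (dim_col A) \<and> A ^\<^sub>m (k - 1) \<noteq> 0\<^sub>m (dim_row A) (dim_col A)"

definition has_cycle :: "(nat \<Rightarrow> nat) \<Rightarrow> bool" where
  "has_cycle \<phi> \<longleftrightarrow> (\<exists>m x. m \<ge> 2 \<and> x \<ge> 1 \<and> (\<phi> ^^ m) x = x)"

text \<open>q_j, the j-th prime (q_1 = 2).\<close>
definition q :: "nat \<Rightarrow> nat" where
  "q j = enumerate {p. prime p} (j - 1)"

definition prime_pi :: "nat \<Rightarrow> nat" where
  "prime_pi x = card {p. prime p \<and> p \<le> x}"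

definition phi_primes :: "nat \<Rightarrow> nat" where
  "phi_primes x = (if prime x then q (Suc (THE j. j \<ge> 1 \<and> q j = x)) else 0)"

end

theory Submission imports Defs begin

lemma inf_primes: "infinite {p::nat. prime p}"
  using primes_infinite by simp

lemma q_prime: "prime (q j)"
  unfolding q_def using enumerate_in_set[OF inf_primes] by simp

lemma q_less: "1 \<le> i \<Longrightarrow> i < j \<Longrightarrow> q i < q j"
  unfolding q_def using enumerate_mono[OF _ inf_primes] by simp

lemma q_inj: "1 \<le> i \<Longrightarrow> 1 \<le> j \<Longrightarrow> q i = q j \<longleftrightarrow> i = j"
  by (metis linorder_neqE_nat q_less less_irrefl)

lemma q_le_iff: "1 \<le> i \<Longrightarrow> 1 \<le> j \<Longrightarrow> q i \<le> q j \<longleftrightarrow> i \<le> j"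
  by (metis le_less not_le q_less q_inj)

lemma qeq2: "q i = q j \<Longrightarrow> 1 \<le> i \<Longrightarrow> 1 \<le> j \<Longrightarrow> i = j"
  using q_inj by blast

lemma qeq: "x + 1 = q i \<Longrightarrow> x + 1 = q j \<Longrightarrow> 1 \<le> i \<Longrightarrow> 1 \<le> j \<Longrightarrow> i = j"
proof -
  assume h: "x + 1 = q i" "x + 1 = q j" "1 \<le> i" "1 \<le> j"
  have "q i = q j" using h(1) h(2) by (rule trans[OF sym])
  then show "i = j" using h(3,4) by (rule qeq2)
qed

lemma q_ex: "prime p \<Longrightarrow> \<exists>j\<ge>1. q j = p"
proof -
  assume "prime p"
  then obtain k where "enumerate {p. prime p} k = p"
    using enumerate_Ex[OF inf_primes] by auto
  then show ?thesis unfolding q_def by (intro exI[of _ "Suc k"]) auto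
qed

lemma q_ge2: "q j \<ge> 2"
  using q_prime prime_ge_2_nat by blast

lemma q_le_n_iff: assumes "1 \<le> j" shows "q j \<le> n \<longleftrightarrow> j \<le> prime_pi n"
proof
  assume h: "q j \<le> n"
  have "q ` {1..j} \<subseteq> {p. prime p \<and> p \<le> n}"
  proof -
    have "\<And>i. 1 \<le> i \<Longrightarrow> i \<le> j \<Longrightarrow> q i \<le> n" using q_le_iff[of _ j] assms h by force
    then show ?thesis using q_prime by auto
  qed
  moreover have "inj_on q {1..j}" unfolding inj_on_def using q_inj by auto
  ultimately have "card (q ` {1..j}) \<le> prime_pi n" unfolding prime_pi_def
    by (intro card_mono) auto
  then show "j \<le> prime_pi n" using \<open>inj_on q {1..j}\<close> by (simp add: card_image)
next
  assume h: "j \<le> prime_pi n"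
  show "q j \<le> n"
  proof (rule ccontr)
    assume "\<not> q j \<le> n"
    have "{p. prime p \<and> p \<le> n} \<subseteq> q ` {1..j-1}"
    proof
      fix p assume "p \<in> {p. prime p \<and> p \<le> n}"
      then obtain i where i: "i \<ge> 1" "q i = p" "p \<le> n" using q_ex by auto
      then have "i < j" using \<open>\<not> q j \<le> n\<close> assms q_le_iff by (metis le_trans nat_le_linear not_le)
      then show "p \<in> q ` {1..j-1}" using i by auto
    qed
    then have "prime_pi n \<le> card (q ` {1..j-1})" unfolding prime_pi_def
      by (intro card_mono) auto
    also have "\<dots> \<le> j - 1" using card_image_le[of "{1..j-1}" q] by simp
    finally show False using h assms by simp
  qed
qed

lemma phi_q: "1 \<le> j \<Longrightarrow> phi_primes (q j) = q (Suc j)"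
proof -
  assume j: "1 \<le> j"
  have "(THE i. i \<ge> 1 \<and> q i = q j) = j"
    using j q_inj by (intro the_equality) auto
  then show ?thesis unfolding phi_primes_def using q_prime by simp
qed

lemma phi_np: "\<not> prime x \<Longrightarrow> phi_primes x = 0"
  unfolding phi_primes_def by simp

lemma phi_gt: "x \<ge> 1 \<Longrightarrow> phi_primes x \<noteq> 0 \<Longrightarrow> phi_primes x > x \<and> prime (phi_primes x)"
  by (metis Suc_le_eq le_refl lessI phi_np phi_q q_ex q_less q_prime zero_less_Suc)

lemma phi_pow: "x \<ge> 1 \<Longrightarrow> (phi_primes ^^ Suc m) x = 0 \<or> (phi_primes ^^ Suc m) x > x"
proof (induction m)
  case 0
  then show ?case using phi_gt by auto
next
  case (Suc m)
  define y where "y = (phi_primes ^^ Suc m) x"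
  have "(phi_primes ^^ Suc (Suc m)) x = phi_primes y" unfolding y_def by simp
  moreover have "phi_primes y = 0 \<or> phi_primes y > x"
  proof (cases "y = 0")
    case True then show ?thesis using phi_np by auto
  next
    case False then have "y > x" using Suc unfolding y_def by auto
    moreover have "y \<ge> 1" using \<open>y > x\<close> Suc.prems by simp
    ultimately show ?thesis using phi_gt[of y] by (meson order.strict_trans)
  qed
  ultimately show ?case by simp
qed

lemma mult_entry: "A \<in> carrier_mat n n \<Longrightarrow> B \<in> carrier_mat n n \<Longrightarrow> i < n \<Longrightarrow> j < n \<Longrightarrow>
  (A * B) $$ (i,j) = (\<Sum>c<n. A $$ (i,c) * B $$ (c,j))"
  by (simp add: scalar_prod_def lessThan_atLeast0)

lemma sum_of_bool_unique:
  assumes "finite S" "\<And>c c'. c \<in> S \<Longrightarrow> c' \<in> S \<Longrightarrow> X c \<Longrightarrow> X c' \<Longrightarrow> c = c'"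
  shows "(\<Sum>c\<in>S. (of_bool (X c) :: int)) = of_bool (\<exists>c\<in>S. X c)"
proof (cases "\<exists>c\<in>S. X c")
  case True
  then obtain c0 where c0: "c0 \<in> S" "X c0" by auto
  have "(\<Sum>c\<in>S. (of_bool (X c) :: int)) = (\<Sum>c\<in>S. if c = c0 then 1 else 0)"
    using assms(2) c0 by (intro sum.cong) auto
  also have "\<dots> = 1" using c0 assms(1) by simp
  finally show ?thesis using True by simp
next
  case False
  then show ?thesis by simp
qed

definition R :: "nat \<Rightarrow> nat \<Rightarrow> nat \<Rightarrow> nat \<Rightarrow> bool" where
  "R P k a b \<longleftrightarrow> (\<exists>j. 1 \<le> j \<and> j + k \<le> P \<and> b + 1 = q j \<and> a + 1 = q (j + k))"

definition T :: "nat \<Rightarrow> nat \<Rightarrow> nat \<Rightarrow> bool" where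
  "T P a b \<longleftrightarrow> (\<exists>i j. 1 \<le> j \<and> j < i \<and> i \<le> P \<and> a + 1 = q i \<and> b + 1 = q j)"

lemma R_bounds: "R (prime_pi n) k a b \<Longrightarrow> a < n \<and> b < n"
proof -
  assume "R (prime_pi n) k a b"
  then obtain j where j: "1 \<le> j" "j + k \<le> prime_pi n" "b + 1 = q j" "a + 1 = q (j + k)"
    unfolding R_def by blast
  have "q (j+k) \<le> n" "q j \<le> n" using j q_le_n_iff by auto
  then show ?thesis using j by simp
qed

lemma T_bounds: "T (prime_pi n) a b \<Longrightarrow> a < n \<and> b < n"
proof -
  assume "T (prime_pi n) a b"
  then obtain i j where j: "1 \<le> j" "j < i" "i \<le> prime_pi n" "a + 1 = q i" "b + 1 = q j"
    unfolding T_def by blast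
  have "q i \<le> n" "q j \<le> n" using j q_le_n_iff by auto
  then show ?thesis using j by simp
qed

lemma R1_unique_left: "R P 1 c b \<Longrightarrow> R P 1 c' b \<Longrightarrow> c = c'"
proof -
  assume "R P 1 c b" "R P 1 c' b"
  then obtain j j' where j: "1 \<le> j" "b + 1 = q j" "c + 1 = q (j + 1)"
    "1 \<le> j'" "b + 1 = q j'" "c' + 1 = q (j' + 1)" unfolding R_def by blast
  have "j = j'" by (rule qeq[OF j(2) j(5) j(1) j(4)])
  then show "c = c'" using j by simp
qed

lemma R1_unique_right: "R P 1 a c \<Longrightarrow> R P 1 a c' \<Longrightarrow> c = c'"
proof -
  assume "R P 1 a c" "R P 1 a c'"
  then obtain j j' where j: "1 \<le> j" "c + 1 = q j" "a + 1 = q (j + 1)"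
    "1 \<le> j'" "c' + 1 = q j'" "a + 1 = q (j' + 1)" unfolding R_def by blast
  have "j + 1 = j' + 1" by (rule qeq[OF j(3) j(6)]) simp_all
  then show "c = c'" using j by simp
qed

lemma R_comp:
  assumes "P = prime_pi n"
  shows "(\<exists>c<n. R P k a c \<and> R P 1 c b) \<longleftrightarrow> R P (Suc k) a b"
proof
  assume "\<exists>c<n. R P k a c \<and> R P 1 c b"
  then obtain c where c: "R P k a c" "R P 1 c b" by blast
  from c(2) obtain j1 where j1: "1 \<le> j1" "j1 + 1 \<le> P" "b + 1 = q j1" "c + 1 = q (j1 + 1)"
    unfolding R_def by blast
  from c(1) obtain j2 where j2: "1 \<le> j2" "j2 + k \<le> P" "c + 1 = q j2" "a + 1 = q (j2 + k)"
    unfolding R_def by blast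
  note j = j1 j2
  have "j2 = j1 + 1" by (rule qeq[OF j2(3) j1(4) j2(1)]) simp
  then show "R P (Suc k) a b" unfolding R_def using j by (intro exI[of _ j1]) auto
next
  assume "R P (Suc k) a b"
  then obtain j where j: "1 \<le> j" "j + Suc k \<le> P" "b + 1 = q j" "a + 1 = q (j + Suc k)"
    unfolding R_def by blast
  define c where "c = q (j+1) - 1"
  have c1: "c + 1 = q (j+1)" unfolding c_def using q_ge2[of "j+1"] by simp
  have "q (j+1) \<le> n" using q_le_n_iff[of "j+1" n] j assms by simp
  then have "c < n" using c1 by simp
  moreover have "R P k a c" unfolding R_def using j c1 by (intro exI[of _ "j+1"]) auto
  moreover have "R P 1 c b" unfolding R_def using j c1 by (intro exI[of _ j]) auto
  ultimately show "\<exists>c<n. R P k a c \<and> R P 1 c b" by blast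
qed

lemma M_carrier: "M_mat n phi_primes \<in> carrier_mat n n"
  unfolding M_mat_def by simp

lemma M_entry:
  assumes "a < n" "b < n"
  shows "M_mat n phi_primes $$ (a,b) = of_bool (R (prime_pi n) 1 a b)"
proof -
  have "M_mat n phi_primes $$ (a,b) = of_bool (phi_primes (b+1) = a+1)"
    using assms unfolding M_mat_def loc_fun_def by auto
  also have "(phi_primes (b+1) = a+1) \<longleftrightarrow> R (prime_pi n) 1 a b"
  proof (cases "prime (b+1)")
    case True
    then obtain j where j: "j \<ge> 1" "q j = b + 1" using q_ex by blast
    then have ph: "phi_primes (b+1) = q (j+1)" using phi_q[OF j(1)] j(2) by simp
    show ?thesis
    proof
      assume h: "phi_primes (b+1) = a+1"
      then have "q (j+1) \<le> n" using ph assms by simp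
      then have "j + 1 \<le> prime_pi n" using q_le_n_iff[of "j+1"] by simp
      then show "R (prime_pi n) 1 a b" unfolding R_def using j h ph by (intro exI[of _ j]) auto
    next
      assume "R (prime_pi n) 1 a b"
      then obtain j' where j': "1 \<le> j'" "b + 1 = q j'" "a + 1 = q (j' + 1)" unfolding R_def by blast
      have "j' = j" by (rule qeq[OF j'(2) j(2)[symmetric] j'(1) j(1)])
      then show "phi_primes (b+1) = a+1" using ph j' by simp
    qed
  next
    case False
    then have "phi_primes (b+1) = 0" using phi_np by blast
    moreover have "\<not> R (prime_pi n) 1 a b" unfolding R_def using False q_prime by metis
    ultimately show ?thesis by simp
  qed
  finally show ?thesis .
qed

lemma Mpow_entry:
  assumes "a < n" "b < n"
  shows "(M_mat n phi_primes ^\<^sub>m Suc k) $$ (a,b) = of_bool (R (prime_pi n) (Suc k) a b)"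
  using assms
proof (induction k arbitrary: a b)
  case 0
  have "M_mat n phi_primes ^\<^sub>m Suc 0 = M_mat n phi_primes"
    using M_carrier[of n] by simp
  then show ?case using M_entry[OF 0] by simp
next
  case (Suc k)
  let ?M = "M_mat n phi_primes"
  have "(?M ^\<^sub>m Suc (Suc k)) $$ (a,b) = (\<Sum>c<n. (?M ^\<^sub>m Suc k) $$ (a,c) * ?M $$ (c,b))"
    unfolding pow_mat.simps(2)[of ?M "Suc k"]
    by (rule mult_entry[OF pow_carrier_mat[OF M_carrier] M_carrier Suc.prems])
  also have "\<dots> = (\<Sum>c<n. of_bool (R (prime_pi n) (Suc k) a c \<and> R (prime_pi n) 1 c b))"
    using Suc M_entry by (intro sum.cong) auto
  also have "\<dots> = of_bool (\<exists>c\<in>{..<n}. R (prime_pi n) (Suc k) a c \<and> R (prime_pi n) 1 c b)"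
    by (rule sum_of_bool_unique) (auto intro: R1_unique_left)
  also have "\<dots> = of_bool (R (prime_pi n) (Suc (Suc k)) a b)"
    using R_comp[of "prime_pi n" n "Suc k" a b] by auto
  finally show ?case .
qed

lemma E_entry: "a < n \<Longrightarrow> b < n \<Longrightarrow> E_mat n i j $$ (a,b) = of_bool (a + 1 = i \<and> b + 1 = j)"
  unfolding E_mat_def by simp

lemma msum_entry:
  assumes "a < n" "b < n"
  shows "mat_sum n (\<lambda>j. E_mat n (q (j + k)) (q j)) {1..prime_pi n - k} $$ (a,b) = of_bool (R (prime_pi n) k a b)"
proof -
  have "mat_sum n (\<lambda>j. E_mat n (q (j + k)) (q j)) {1..prime_pi n - k} $$ (a,b)
      = (\<Sum>j\<in>{1..prime_pi n - k}. of_bool (a + 1 = q (j + k) \<and> b + 1 = q j))"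
    unfolding mat_sum_def using assms E_entry by simp
  also have "\<dots> = of_bool (\<exists>j\<in>{1..prime_pi n - k}. a + 1 = q (j + k) \<and> b + 1 = q j)"
  proof (rule sum_of_bool_unique)
    fix c c' assume "c \<in> {1..prime_pi n - k}" "c' \<in> {1..prime_pi n - k}"
      "a + 1 = q (c + k) \<and> b + 1 = q c" "a + 1 = q (c' + k) \<and> b + 1 = q c'"
    then have "b + 1 = q c" "b + 1 = q c'" "1 \<le> c" "1 \<le> c'" by auto
    then show "c = c'" by (rule qeq)
  qed simp
  also have "(\<exists>j\<in>{1..prime_pi n - k}. a + 1 = q (j + k) \<and> b + 1 = q j) \<longleftrightarrow> R (prime_pi n) k a b"
  proof -
    have e: "\<And>j. 1 \<le> j \<Longrightarrow> (j \<le> prime_pi n - k) = (j + k \<le> prime_pi n)"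
      by (cases "k \<le> prime_pi n") auto
    show ?thesis
    proof
      assume "\<exists>j\<in>{1..prime_pi n - k}. a + 1 = q (j + k) \<and> b + 1 = q j"
      then obtain j where "j \<in> {1..prime_pi n - k}" "a + 1 = q (j + k)" "b + 1 = q j" by blast
      then show "R (prime_pi n) k a b" unfolding R_def using e[of j] by (intro exI[of _ j]) auto
    next
      assume "R (prime_pi n) k a b"
      then obtain j where "1 \<le> j" "j + k \<le> prime_pi n" "b + 1 = q j" "a + 1 = q (j + k)"
        unfolding R_def by blast
      then show "\<exists>j\<in>{1..prime_pi n - k}. a + 1 = q (j + k) \<and> b + 1 = q j"
        using e[of j] by (intro bexI[of _ j]) auto
    qed
  qed
  finally show ?thesis .
qed

lemma T_irrefl: "\<not> T P a a"
  unfolding T_def using q_less by (metis less_irrefl)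

lemma T_split_right:
  assumes "P = prime_pi n"
  shows "T P a b \<longleftrightarrow> R P 1 a b \<or> (\<exists>c<n. T P a c \<and> R P 1 c b)"
proof
  assume "T P a b"
  then obtain i j where j: "1 \<le> j" "j < i" "i \<le> P" "a + 1 = q i" "b + 1 = q j"
    unfolding T_def by blast
  show "R P 1 a b \<or> (\<exists>c<n. T P a c \<and> R P 1 c b)"
  proof (cases "i = j + 1")
    case True
    then have "R P 1 a b" unfolding R_def using j by (intro exI[of _ j]) auto
    then show ?thesis by blast
  next
    case False
    define c where "c = q (j+1) - 1"
    have c1: "c + 1 = q (j+1)" unfolding c_def using q_ge2[of "j+1"] by simp
    have "q (j+1) \<le> n" using q_le_n_iff[of "j+1" n] j assms False by simp
    then have "c < n" using c1 by simp
    moreover have "T P a c" unfolding T_def using j c1 False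
      by (intro exI[of _ i] exI[of _ "j+1"]) auto
    moreover have "R P 1 c b" unfolding R_def using j c1 False by (intro exI[of _ j]) auto
    ultimately show ?thesis by blast
  qed
next
  assume "R P 1 a b \<or> (\<exists>c<n. T P a c \<and> R P 1 c b)"
  then show "T P a b"
  proof
    assume "R P 1 a b"
    then obtain j where j: "1 \<le> j" "j + 1 \<le> P" "b + 1 = q j" "a + 1 = q (j + 1)"
      unfolding R_def by blast
    then show "T P a b" unfolding T_def by (intro exI[of _ "j+1"] exI[of _ j]) auto
  next
    assume "\<exists>c<n. T P a c \<and> R P 1 c b"
    then obtain c where c: "T P a c" "R P 1 c b" by blast
    from c(1) obtain i j' where ij: "1 \<le> j'" "j' < i" "i \<le> P" "a + 1 = q i" "c + 1 = q j'"
      unfolding T_def by blast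
    from c(2) obtain j where j: "1 \<le> j" "j + 1 \<le> P" "b + 1 = q j" "c + 1 = q (j + 1)"
      unfolding R_def by blast
    have "j' = j + 1" by (rule qeq[OF ij(5) j(4) ij(1)]) simp
    then show "T P a b" unfolding T_def using ij j by (intro exI[of _ i] exI[of _ j]) auto
  qed
qed

lemma T_split_left:
  assumes "P = prime_pi n"
  shows "T P a b \<longleftrightarrow> R P 1 a b \<or> (\<exists>c<n. R P 1 a c \<and> T P c b)"
proof
  assume "T P a b"
  then obtain i j where j: "1 \<le> j" "j < i" "i \<le> P" "a + 1 = q i" "b + 1 = q j"
    unfolding T_def by blast
  show "R P 1 a b \<or> (\<exists>c<n. R P 1 a c \<and> T P c b)"
  proof (cases "i = j + 1")
    case True
    then have "R P 1 a b" unfolding R_def using j by (intro exI[of _ j]) auto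
    then show ?thesis by blast
  next
    case False
    define c where "c = q (i - 1) - 1"
    have c1: "c + 1 = q (i - 1)" unfolding c_def using q_ge2[of "i - 1"] by simp
    have "q (i - 1) \<le> n" using q_le_n_iff[of "i - 1" n] j assms False by simp
    then have "c < n" using c1 by simp
    moreover have "T P c b" unfolding T_def using j c1 False
      by (intro exI[of _ "i - 1"] exI[of _ j]) auto
    moreover have "R P 1 a c" unfolding R_def using j c1 False by (intro exI[of _ "i - 1"]) auto
    ultimately show ?thesis by blast
  qed
next
  assume "R P 1 a b \<or> (\<exists>c<n. R P 1 a c \<and> T P c b)"
  then show "T P a b"
  proof
    assume "R P 1 a b"
    then obtain j where j: "1 \<le> j" "j + 1 \<le> P" "b + 1 = q j" "a + 1 = q (j + 1)"
      unfolding R_def by blast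
    then show "T P a b" unfolding T_def by (intro exI[of _ "j+1"] exI[of _ j]) auto
  next
    assume "\<exists>c<n. R P 1 a c \<and> T P c b"
    then obtain c where c: "R P 1 a c" "T P c b" by blast
    from c(2) obtain i j where ij: "1 \<le> j" "j < i" "i \<le> P" "c + 1 = q i" "b + 1 = q j"
      unfolding T_def by blast
    from c(1) obtain j0 where j: "1 \<le> j0" "j0 + 1 \<le> P" "c + 1 = q j0" "a + 1 = q (j0 + 1)"
      unfolding R_def by blast
    have "i = j0" by (rule qeq[OF ij(4) j(3)]) (use ij j in auto)
    then show "T P a b" unfolding T_def using ij j by (intro exI[of _ "j0+1"] exI[of _ j]) auto
  qed
qed

lemma excl_right: "R P 1 a b \<Longrightarrow> T P a c \<Longrightarrow> R P 1 c b \<Longrightarrow> False"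
  using R1_unique_left T_irrefl by metis

lemma excl_left: "R P 1 a b \<Longrightarrow> R P 1 a c \<Longrightarrow> T P c b \<Longrightarrow> False"
  using R1_unique_right T_irrefl by metis

definition Sset :: "nat \<Rightarrow> (nat \<times> nat) set" where
  "Sset P = {(i, j). 1 \<le> j \<and> j < i \<and> i \<le> P}"

lemma Sset_finite: "finite (Sset P)"
  by (rule finite_subset[of _ "{1..P} \<times> {1..P}"]) (auto simp: Sset_def)

lemma Sset_card: "card (Sset P) = P choose 2"
proof (induction P)
  case 0
  have "Sset 0 = {}" unfolding Sset_def by auto
  then show ?case by simp
next
  case (Suc P)
  have eq: "Sset (Suc P) = Sset P \<union> (\<lambda>j. (Suc P, j)) ` {1..P}"
    unfolding Sset_def by auto
  have "card (Sset (Suc P)) = card (Sset P) + card ((\<lambda>j. (Suc P, j)) ` {1..P})"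
    unfolding eq using Sset_finite[of P] by (intro card_Un_disjoint) (auto simp: Sset_def)
  also have "card ((\<lambda>j. (Suc P, j)) ` {1..P}) = P"
    by (subst card_image) (auto simp: inj_on_def)
  finally show ?case using Suc by (simp add: numeral_2_eq_2)
qed

lemma mat_sum_dims[simp]: "dim_row (mat_sum n f J) = n" "dim_col (mat_sum n f J) = n"
  unfolding mat_sum_def by auto

lemma mat_sum_carrier[simp]: "mat_sum n f J \<in> carrier_mat n n"
  unfolding carrier_mat_def by auto

lemma B_entry:
  assumes "a < n" "b < n"
  shows "(1\<^sub>m n + mat_sum n (\<lambda>(i, j). E_mat n (q i) (q j)) (Sset (prime_pi n))) $$ (a,b)
    = of_bool (a = b) + of_bool (T (prime_pi n) a b)"
proof -
  let ?S = "Sset (prime_pi n)"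
  have "mat_sum n (\<lambda>(i, j). E_mat n (q i) (q j)) ?S $$ (a,b)
      = (\<Sum>x\<in>?S. of_bool ((\<lambda>(i,j). a + 1 = q i \<and> b + 1 = q j) x))"
    unfolding mat_sum_def using assms by (auto simp: E_entry intro!: sum.cong)
  also have "\<dots> = of_bool (\<exists>x\<in>?S. (\<lambda>(i,j). a + 1 = q i \<and> b + 1 = q j) x)"
  proof (rule sum_of_bool_unique[OF Sset_finite])
    fix x x' assume "x \<in> ?S" "x' \<in> ?S" "(\<lambda>(i,j). a + 1 = q i \<and> b + 1 = q j) x"
      "(\<lambda>(i,j). a + 1 = q i \<and> b + 1 = q j) x'"
    then obtain i j i' j' where xx: "x = (i,j)" "x' = (i',j')" "1 \<le> j" "j < i" "1 \<le> j'" "j' < i'"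
      "a + 1 = q i" "b + 1 = q j" "a + 1 = q i'" "b + 1 = q j'"
      unfolding Sset_def by auto
    have "i = i'" by (rule qeq[OF xx(7) xx(9)]) (use xx in auto)
    moreover have "j = j'" by (rule qeq[OF xx(8) xx(10)]) (use xx in auto)
    ultimately show "x = x'" using xx by simp
  qed
  also have "(\<exists>x\<in>?S. (\<lambda>(i,j). a + 1 = q i \<and> b + 1 = q j) x) \<longleftrightarrow> T (prime_pi n) a b"
    unfolding Sset_def T_def by auto
  finally show ?thesis using assms by simp
qed

lemma Mhat_entry:
  assumes "a < n" "b < n"
  shows "M_hat n phi_primes $$ (a,b) = of_bool (a = b) - of_bool (R (prime_pi n) 1 a b)"
  unfolding M_hat_def using assms M_carrier[of n] M_entry[OF assms] by simp

lemma sum_diag1: "(a::nat) < n \<Longrightarrow> (\<Sum>c<n. (of_bool (a = c \<and> X c) :: int)) = of_bool (X a)"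
  by (subst sum_of_bool_unique) auto

lemma sum_diag2: "(b::nat) < n \<Longrightarrow> (\<Sum>c<n. (of_bool (X c \<and> c = b) :: int)) = of_bool (X b)"
  by (subst sum_of_bool_unique) auto

lemma ob1: "(of_bool A + of_bool B) * (of_bool C - of_bool D) =
   (of_bool (A\<and>C) - of_bool (A\<and>D) + of_bool (B\<and>C) - of_bool (B\<and>D) :: int)"
  by (cases A; cases B; cases C; cases D) auto

lemma ob2: "(of_bool A - of_bool B) * (of_bool C + of_bool D) =
   (of_bool (A\<and>C) + of_bool (A\<and>D) - of_bool (B\<and>C) - of_bool (B\<and>D) :: int)"
  by (cases A; cases B; cases C; cases D) auto

definition Bm :: "nat \<Rightarrow> int mat" where
  "Bm n = 1\<^sub>m n + mat_sum n (\<lambda>(i, j). E_mat n (q i) (q j)) (Sset (prime_pi n))"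

lemma Bm_carrier: "Bm n \<in> carrier_mat n n"
  unfolding Bm_def by (rule add_carrier_mat[OF mat_sum_carrier])

lemma Mhat_carrier: "M_hat n phi_primes \<in> carrier_mat n n"
  unfolding M_hat_def by (rule minus_carrier_mat[OF M_carrier])

lemma prod1_entry:
  assumes ab: "a < n" "b < n"
  shows "(M_hat n phi_primes * Bm n) $$ (a,b) = of_bool (a = b)"
proof -
  let ?P = "prime_pi n"
  have "(M_hat n phi_primes * Bm n) $$ (a,b) = (\<Sum>c<n. M_hat n phi_primes $$ (a,c) * Bm n $$ (c,b))"
    by (rule mult_entry[OF Mhat_carrier Bm_carrier ab])
  also have "\<dots> = (\<Sum>c<n. of_bool (a = c \<and> c = b) + of_bool (a = c \<and> T ?P c b)
       - of_bool (R ?P 1 a c \<and> c = b) - of_bool (R ?P 1 a c \<and> T ?P c b))"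
  proof (rule sum.cong[OF refl])
    fix c assume "c \<in> {..<n}" then have c: "c < n" by simp
    show "M_hat n phi_primes $$ (a,c) * Bm n $$ (c,b) = of_bool (a = c \<and> c = b) + of_bool (a = c \<and> T ?P c b)
       - of_bool (R ?P 1 a c \<and> c = b) - of_bool (R ?P 1 a c \<and> T ?P c b)"
      unfolding Mhat_entry[OF ab(1) c] B_entry[OF c ab(2), folded Bm_def] by (rule ob2)
  qed
  also have "\<dots> = (\<Sum>c<n. of_bool (a = c \<and> c = b)) + (\<Sum>c<n. of_bool (a = c \<and> T ?P c b))
       - (\<Sum>c<n. of_bool (R ?P 1 a c \<and> c = b)) - (\<Sum>c<n. of_bool (R ?P 1 a c \<and> T ?P c b))"
    by (simp only: sum.distrib sum_subtractf)
  also have "\<dots> = of_bool (a = b) + of_bool (T ?P a b) - of_bool (R ?P 1 a b)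
      - of_bool (\<exists>c\<in>{..<n}. R ?P 1 a c \<and> T ?P c b)"
  proof -
    have u: "(\<Sum>c<n. (of_bool (R ?P 1 a c \<and> T ?P c b) :: int)) = of_bool (\<exists>c\<in>{..<n}. R ?P 1 a c \<and> T ?P c b)"
      by (rule sum_of_bool_unique) (auto intro: R1_unique_right)
    show ?thesis
      by (simp only: u sum_diag1[OF ab(1), of "\<lambda>c. c = b"] sum_diag1[OF ab(1), of "\<lambda>c. T ?P c b"]
      sum_diag2[OF ab(2), of "\<lambda>c. R ?P 1 a c"])
  qed
  also have "\<dots> = of_bool (a = b)"
  proof -
    have s: "T ?P a b \<longleftrightarrow> R ?P 1 a b \<or> (\<exists>c\<in>{..<n}. R ?P 1 a c \<and> T ?P c b)"
      unfolding Bex_def lessThan_iff using T_split_left[OF refl, of n a b] .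
    have x: "\<not> (R ?P 1 a b \<and> (\<exists>c\<in>{..<n}. R ?P 1 a c \<and> T ?P c b))"
      using excl_left by blast
    have "(of_bool (T ?P a b) :: int) = of_bool (R ?P 1 a b) + of_bool (\<exists>c\<in>{..<n}. R ?P 1 a c \<and> T ?P c b)"
      by (cases "R ?P 1 a b") (use s x in auto)
    then show ?thesis by simp
  qed
  finally show ?thesis .
qed

lemma prod2_entry:
  assumes ab: "a < n" "b < n"
  shows "(Bm n * M_hat n phi_primes) $$ (a,b) = of_bool (a = b)"
proof -
  let ?P = "prime_pi n"
  have "(Bm n * M_hat n phi_primes) $$ (a,b) = (\<Sum>c<n. Bm n $$ (a,c) * M_hat n phi_primes $$ (c,b))"
    by (rule mult_entry[OF Bm_carrier Mhat_carrier ab])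
  also have "\<dots> = (\<Sum>c<n. of_bool (a = c \<and> c = b) - of_bool (a = c \<and> R ?P 1 c b)
       + of_bool (T ?P a c \<and> c = b) - of_bool (T ?P a c \<and> R ?P 1 c b))"
  proof (rule sum.cong[OF refl])
    fix c assume "c \<in> {..<n}" then have c: "c < n" by simp
    show "Bm n $$ (a,c) * M_hat n phi_primes $$ (c,b) = of_bool (a = c \<and> c = b) - of_bool (a = c \<and> R ?P 1 c b)
       + of_bool (T ?P a c \<and> c = b) - of_bool (T ?P a c \<and> R ?P 1 c b)"
      unfolding Mhat_entry[OF c ab(2)] B_entry[OF ab(1) c, folded Bm_def] by (rule ob1)
  qed
  also have "\<dots> = (\<Sum>c<n. of_bool (a = c \<and> c = b)) - (\<Sum>c<n. of_bool (a = c \<and> R ?P 1 c b))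
       + (\<Sum>c<n. of_bool (T ?P a c \<and> c = b)) - (\<Sum>c<n. of_bool (T ?P a c \<and> R ?P 1 c b))"
    by (simp only: sum.distrib sum_subtractf)
  also have "\<dots> = of_bool (a = b) - of_bool (R ?P 1 a b) + of_bool (T ?P a b)
      - of_bool (\<exists>c\<in>{..<n}. T ?P a c \<and> R ?P 1 c b)"
  proof -
    have u: "(\<Sum>c<n. (of_bool (T ?P a c \<and> R ?P 1 c b) :: int)) = of_bool (\<exists>c\<in>{..<n}. T ?P a c \<and> R ?P 1 c b)"
      by (rule sum_of_bool_unique) (auto intro: R1_unique_left)
    show ?thesis
      by (simp only: u sum_diag1[OF ab(1), of "\<lambda>c. c = b"] sum_diag1[OF ab(1), of "\<lambda>c. R ?P 1 c b"]
      sum_diag2[OF ab(2), of "\<lambda>c. T ?P a c"])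
  qed
  also have "\<dots> = of_bool (a = b)"
  proof -
    have s: "T ?P a b \<longleftrightarrow> R ?P 1 a b \<or> (\<exists>c\<in>{..<n}. T ?P a c \<and> R ?P 1 c b)"
      unfolding Bex_def lessThan_iff using T_split_right[OF refl, of n a b] .
    have x: "\<not> (R ?P 1 a b \<and> (\<exists>c\<in>{..<n}. T ?P a c \<and> R ?P 1 c b))"
      using excl_right by blast
    have "(of_bool (T ?P a b) :: int) = of_bool (R ?P 1 a b) + of_bool (\<exists>c\<in>{..<n}. T ?P a c \<and> R ?P 1 c b)"
      by (cases "R ?P 1 a b") (use s x in auto)
    then show ?thesis by simp
  qed
  finally show ?thesis .
qed

lemma Bm_nnz: "nnz (Bm n) = n + (prime_pi n choose 2)"
proof -
  let ?P = "prime_pi n"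
  have dims: "dim_row (Bm n) = n" "dim_col (Bm n) = n" using Bm_carrier[of n] by auto
  have "{(a, b). a < dim_row (Bm n) \<and> b < dim_col (Bm n) \<and> Bm n $$ (a, b) \<noteq> 0}
      = (\<lambda>a. (a, a)) ` {..<n} \<union> (\<lambda>(i, j). (q i - 1, q j - 1)) ` Sset ?P" (is "?L = ?R")
  proof
    show "?L \<subseteq> ?R"
    proof
      fix x assume "x \<in> ?L"
      then obtain a b where x: "x = (a,b)" "a < n" "b < n" "Bm n $$ (a,b) \<noteq> 0"
        using dims by auto
      then have "a = b \<or> T ?P a b" using B_entry[of a n b] unfolding Bm_def by auto
      then show "x \<in> ?R"
      proof
        assume "a = b" then show ?thesis using x by auto
      next
        assume "T ?P a b"
        then obtain i j where j: "1 \<le> j" "j < i" "i \<le> ?P" "a + 1 = q i" "b + 1 = q j"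
          unfolding T_def by blast
        then have "(i, j) \<in> Sset ?P" "a = q i - 1" "b = q j - 1" unfolding Sset_def by auto
        then show ?thesis using x by force
      qed
    qed
  next
    show "?R \<subseteq> ?L"
    proof
      fix x assume "x \<in> ?R"
      then show "x \<in> ?L"
      proof
        assume "x \<in> (\<lambda>a. (a, a)) ` {..<n}"
        then obtain a where "x = (a,a)" "a < n" by auto
        then show ?thesis using dims B_entry[of a n a] T_irrefl unfolding Bm_def by auto
      next
        assume "x \<in> (\<lambda>(i, j). (q i - 1, q j - 1)) ` Sset ?P"
        then obtain i j where ij: "(i,j) \<in> Sset ?P" "x = (q i - 1, q j - 1)" by auto
        have t: "T ?P (q i - 1) (q j - 1)" unfolding T_def using ij q_ge2[of i] q_ge2[of j]
          unfolding Sset_def by (intro exI[of _ i] exI[of _ j]) auto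
        then have "q i - 1 < n" "q j - 1 < n" using T_bounds by auto
        moreover have "q i - 1 \<noteq> q j - 1" using t T_irrefl by metis
        ultimately show ?thesis using ij t dims B_entry[of "q i - 1" n "q j - 1"]
          unfolding Bm_def by auto
      qed
    qed
  qed
  moreover have "card ?R = n + card (Sset ?P)"
  proof -
    have inj: "inj_on (\<lambda>(i, j). (q i - 1, q j - 1)) (Sset ?P)"
    proof (rule inj_onI)
      fix x y assume "x \<in> Sset ?P" "y \<in> Sset ?P"
        "(\<lambda>(i, j). (q i - 1, q j - 1)) x = (\<lambda>(i, j). (q i - 1, q j - 1)) y"
      then obtain i j i' j' where xy: "x = (i,j)" "y = (i',j')" "1 \<le> j" "j < i" "1 \<le> j'" "j' < i'"
        "q i - 1 = q i' - 1" "q j - 1 = q j' - 1" unfolding Sset_def by auto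
      then have "q i = q i'" "q j = q j'" using q_ge2[of i] q_ge2[of i'] q_ge2[of j] q_ge2[of j'] by simp_all
      then have "i = i'" "j = j'" using xy by (auto intro: qeq2)
      then show "x = y" using xy by simp
    qed
    have "card ?R = card ((\<lambda>a. (a, a)) ` {..<n}) + card ((\<lambda>(i, j). (q i - 1, q j - 1)) ` Sset ?P)"
    proof (rule card_Un_disjoint)
      show "(\<lambda>a. (a, a)) ` {..<n} \<inter> (\<lambda>(i, j). (q i - 1, q j - 1)) ` Sset ?P = {}"
      proof (rule ccontr)
        assume "\<not> ?thesis"
        then obtain i j where ij: "(i,j) \<in> Sset ?P" "q i - 1 = q j - 1" by auto
        then have "q i = q j" using q_ge2[of i] q_ge2[of j] by simp
        moreover have "1 \<le> i" "1 \<le> j" "i \<noteq> j" using ij unfolding Sset_def by auto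
        ultimately show False using qeq2 by blast
      qed
    qed (auto intro: Sset_finite)
    also have "\<dots> = n + card (Sset ?P)"
      using inj by (simp add: card_image inj_on_def)
    finally show ?thesis .
  qed
  ultimately show ?thesis unfolding nnz_def using Sset_card by simp
qed

lemma Mpow_entry': "1 \<le> k \<Longrightarrow> a < n \<Longrightarrow> b < n \<Longrightarrow>
  (M_mat n phi_primes ^\<^sub>m k) $$ (a,b) = of_bool (R (prime_pi n) k a b)"
  using Mpow_entry[of a n b "k - 1"] by simp

lemma M_dims[simp]: "dim_row (M_mat n phi_primes) = n" "dim_col (M_mat n phi_primes) = n"
  unfolding M_mat_def by auto

lemma powform: "1 \<le> k \<Longrightarrow>
  M_mat n phi_primes ^\<^sub>m k = mat_sum n (\<lambda>j. E_mat n (q (j + k)) (q j)) {1..prime_pi n - k}"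
proof -
  assume k: "1 \<le> k"
  show ?thesis
  proof (rule eq_matI)
    fix i j assume "i < dim_row (mat_sum n (\<lambda>j. E_mat n (q (j + k)) (q j)) {1..prime_pi n - k})"
      "j < dim_col (mat_sum n (\<lambda>j. E_mat n (q (j + k)) (q j)) {1..prime_pi n - k})"
    then have ij: "i < n" "j < n" by simp_all
    show "(M_mat n phi_primes ^\<^sub>m k) $$ (i, j) = mat_sum n (\<lambda>j. E_mat n (q (j + k)) (q j)) {1..prime_pi n - k} $$ (i, j)"
      by (simp only: Mpow_entry'[OF k ij] msum_entry[OF ij])
  qed (use M_carrier[of n] in simp_all)
qed

lemma nnz_pow: assumes "1 \<le> k" shows "nnz (M_mat n phi_primes ^\<^sub>m k) = prime_pi n - k"
proof -
  let ?P = "prime_pi n"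
  let ?f = "\<lambda>j. (q (j + k) - 1, q j - 1)"
  have "{(a, b). a < dim_row (M_mat n phi_primes ^\<^sub>m k) \<and> b < dim_col (M_mat n phi_primes ^\<^sub>m k)
      \<and> (M_mat n phi_primes ^\<^sub>m k) $$ (a, b) \<noteq> 0} = ?f ` {1..?P - k}" (is "?L = ?R")
  proof
    show "?L \<subseteq> ?R"
    proof
      fix x assume "x \<in> ?L"
      then obtain a b where x: "x = (a,b)" "a < n" "b < n" "R ?P k a b"
        using assms Mpow_entry' by (auto split: if_splits)
      then obtain j where j: "1 \<le> j" "j + k \<le> ?P" "b + 1 = q j" "a + 1 = q (j + k)"
        unfolding R_def by blast
      then have "x = ?f j" "j \<in> {1..?P - k}" using x by auto
      then show "x \<in> ?R" by blast
    qed
  next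
    show "?R \<subseteq> ?L"
    proof
      fix x assume "x \<in> ?R"
      then obtain j where j: "j \<in> {1..?P - k}" "x = ?f j" by auto
      have r: "R ?P k (q (j + k) - 1) (q j - 1)" unfolding R_def using j q_ge2[of j] q_ge2[of "j+k"]
        by (intro exI[of _ j]) auto
      then show "x \<in> ?L" using R_bounds[OF r] Mpow_entry'[OF assms] j by auto
    qed
  qed
  moreover have "inj_on ?f {1..?P - k}"
  proof (rule inj_onI)
    fix x y assume "x \<in> {1..?P - k}" "y \<in> {1..?P - k}" "?f x = ?f y"
    then have "q x - 1 = q y - 1" by simp
    then have "q x = q y" using q_ge2[of x] q_ge2[of y] by linarith
    then show "x = y" using \<open>x \<in> _\<close> \<open>y \<in> _\<close> by (auto intro: qeq2)
  qed
  ultimately show ?thesis unfolding nnz_def by (simp add: card_image)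
qed

lemma Ppos: "n \<ge> 2 \<Longrightarrow> 1 \<le> prime_pi n"
proof -
  assume n: "n \<ge> 2"
  have "finite {p. prime p \<and> p \<le> n}" by (rule finite_subset[of _ "{..n}"]) auto
  moreover have "(2::nat) \<in> {p. prime p \<and> p \<le> n}" using n two_is_prime_nat by blast
  ultimately have "card {p. prime p \<and> p \<le> n} > 0" using card_gt_0_iff by blast
  then show ?thesis unfolding prime_pi_def by simp
qed

lemma nilp: assumes n: "n \<ge> 2" shows "nilpotent_of_degree (M_mat n phi_primes) (prime_pi n)"
proof -
  let ?P = "prime_pi n" let ?M = "M_mat n phi_primes"
  have P1: "1 \<le> ?P" using Ppos[OF n] .
  have z: "?M ^\<^sub>m ?P = 0\<^sub>m n n"
  proof (rule eq_matI)
    fix a b assume "a < dim_row (0\<^sub>m n n :: int mat)" "b < dim_col (0\<^sub>m n n :: int mat)"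
    then have "a < n" "b < n" by auto
    moreover have "\<not> R ?P ?P a b" unfolding R_def by auto
    ultimately show "(?M ^\<^sub>m ?P) $$ (a,b) = 0\<^sub>m n n $$ (a,b)" using Mpow_entry'[OF P1] by simp
  qed (use P1 in auto)
  have nz: "?M ^\<^sub>m (?P - 1) \<noteq> 0\<^sub>m n n"
  proof (cases "?P = 1")
    case True
    then have "?M ^\<^sub>m (?P - 1) = 1\<^sub>m n" by simp
    moreover have "(1\<^sub>m n :: int mat) $$ (0,0) \<noteq> (0\<^sub>m n n :: int mat) $$ (0,0)" using n by simp
    ultimately show ?thesis by metis
  next
    case False
    then have k: "1 \<le> ?P - 1" using P1 by simp
    have r: "R ?P (?P - 1) (q ?P - 1) (q 1 - 1)" unfolding R_def using P1 q_ge2[of ?P] q_ge2[of 1]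
      by (intro exI[of _ 1]) auto
    have b: "q ?P - 1 < n" "q 1 - 1 < n" using R_bounds[OF r] by auto
    have "(?M ^\<^sub>m (?P - 1)) $$ (q ?P - 1, q 1 - 1) = 1" using Mpow_entry'[OF k b] r by simp
    moreover have "(0\<^sub>m n n :: int mat) $$ (q ?P - 1, q 1 - 1) = 0" using b by simp
    ultimately show ?thesis by auto
  qed
  show ?thesis unfolding nilpotent_of_degree_def using z nz by simp
qed

theorem proposition5p3:
  shows "(\<forall>x::nat. x \<ge> 1 \<longrightarrow> phi_primes x \<noteq> x)
    \<and> \<not> has_cycle phi_primes
    \<and> (\<forall>n::nat. n \<ge> 2 \<longrightarrow>
         nilpotent_of_degree (M_mat n phi_primes) (prime_pi n)
       \<and> (\<forall>k. 1 \<le> k \<and> k \<le> prime_pi n \<longrightarrow>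
             M_mat n phi_primes ^\<^sub>m k
               = mat_sum n (\<lambda>j. E_mat n (q (j + k)) (q j)) {1..prime_pi n - k}
           \<and> nnz (M_mat n phi_primes ^\<^sub>m k) = prime_pi n - k)
       \<and> (let B = 1\<^sub>m n + mat_sum n (\<lambda>(i, j). E_mat n (q i) (q j))
                     {(i, j). 1 \<le> j \<and> j < i \<and> i \<le> prime_pi n}
          in inverts_mat (M_hat n phi_primes) B \<and> inverts_mat B (M_hat n phi_primes)
             \<and> nnz B = n + (prime_pi n choose 2)))"
proof -
  have p1: "\<forall>x::nat. x \<ge> 1 \<longrightarrow> phi_primes x \<noteq> x"
  proof (intro allI impI)
    fix x :: nat assume x: "x \<ge> 1"
    show "phi_primes x \<noteq> x"
    proof (cases "phi_primes x = 0")
      case True then show ?thesis using x by simp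
    next
      case False then show ?thesis using phi_gt[OF x] by auto
    qed
  qed
  have p2: "\<not> has_cycle phi_primes"
  proof
    assume "has_cycle phi_primes"
    then obtain m x where mx: "m \<ge> 2" "x \<ge> 1" "(phi_primes ^^ m) x = x"
      unfolding has_cycle_def by blast
    then obtain m' where "m = Suc m'" by (cases m) auto
    then show False using phi_pow[OF mx(2), of m'] mx by auto
  qed
  have p3: "n \<ge> 2 \<Longrightarrow> nilpotent_of_degree (M_mat n phi_primes) (prime_pi n)
       \<and> (\<forall>k. 1 \<le> k \<and> k \<le> prime_pi n \<longrightarrow>
             M_mat n phi_primes ^\<^sub>m k
               = mat_sum n (\<lambda>j. E_mat n (q (j + k)) (q j)) {1..prime_pi n - k}
           \<and> nnz (M_mat n phi_primes ^\<^sub>m k) = prime_pi n - k)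
       \<and> (let B = 1\<^sub>m n + mat_sum n (\<lambda>(i, j). E_mat n (q i) (q j))
                     {(i, j). 1 \<le> j \<and> j < i \<and> i \<le> prime_pi n}
          in inverts_mat (M_hat n phi_primes) B \<and> inverts_mat B (M_hat n phi_primes)
             \<and> nnz B = n + (prime_pi n choose 2))" for n
  proof -
    assume n: "n \<ge> 2"
    have SS: "{(i, j). 1 \<le> j \<and> j < i \<and> i \<le> prime_pi n} = Sset (prime_pi n)"
      by (simp add: Sset_def)
    have B: "1\<^sub>m n + mat_sum n (\<lambda>(i, j). E_mat n (q i) (q j))
                     {(i, j). 1 \<le> j \<and> j < i \<and> i \<le> prime_pi n} = Bm n"
      unfolding SS Bm_def ..
    have i1: "inverts_mat (M_hat n phi_primes) (Bm n)"
      unfolding inverts_mat_def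
      using Mhat_carrier[of n] Bm_carrier[of n] prod1_entry[of _ n]
      by (intro eq_matI) auto
    have i2: "inverts_mat (Bm n) (M_hat n phi_primes)"
      unfolding inverts_mat_def
      using Mhat_carrier[of n] Bm_carrier[of n] prod2_entry[of _ n]
      by (intro eq_matI) auto
    show ?thesis unfolding Let_def B
      using nilp[OF n] powform nnz_pow i1 i2 Bm_nnz by blast
  qed
  show ?thesis using p1 p2 p3 by blast
qed

end
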